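(* Let $\mathit{LR}$ be the graded dual Hopf algebra of $\mathcal{Y}Sym$ and $\{M^*_t\}$ the basis dual to $\{M_t\}$. Then $\mathit{LR}$ is the free associative algebra generated by $\{M^*_t: t\text{ progressive}\}$, and $M^*_s\cdot M^*_t=M^*_{s\backslash t}$ for all trees $s,t$.
   Context: $\mathcal{Y}_n$ = rooted planar binary trees with $n$ internal nodes, $\mathcal{Y}_0=\{|\}$; $s\vee t$ = tree whose root has left subtree $s$ and right subtree $t$; $t=t_l\vee t_r$ uniquely for $t\ne|$. Tamari order on $\mathcal{Y}_n$: generated by replacing a subtree $(a\vee b)\vee c$ by the larger $a\vee(b\vee c)$. $|\backslash t=t$, $s\backslash t=s_l\vee(s_r\backslash t)$. A tree $t\ne|$ is progressive if $t_r=|$. $\mathcal{Y}Sym$ is the graded connected Hopf algebra over $\mathbb{Q}$ with basis $F_t$ ($t\in\bigsqcup_n\mathcal{Y}_n$, degree $n$ for $t\in\mathcal{Y}_n$). Leaves of $t\in\mathcal{Y}_p$ are numbered $0..p$; splitting at leaf $i$, $t\to(t_0,t_1)$: $|\to(|,|)$; for $t=t_l\vee t_r$, $t\to(a,b\vee t_r)$ if leaf $i$ is in $t_l$ and $t_l\to(a,b)$ there, $t\to(t_l\vee c,d)$ if in $t_r$ and $t_r\to(c,d)$. $\Delta(F_t)=\sum_iF_{t_0}\otimes F_{t_1}$. For $s\in\mathcal{Y}_q$: $F_t\cdot F_s=\sum F_{(t_0,\dots,t_q)/s}$ over multisets $i_1\le\dots\le i_q$ of leaves of $t$, where the division $t\to(t_0,\dots,t_q)$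 splits $t$ at $i_q$ into $(t',t_q)$ then divides $t'$ at $i_1,..,i_{q-1}$, and $(t_0,..,t_q)/s$ grafts the root of $t_i$ on the $i$-th leaf ($0\le i\le q$) of $s$. $M_t=\sum_{t\le s}\mu_{\mathcal{Y}_n}(t,s)F_s$ (Möbius function of Tamari order). The product of $\mathit{LR}$ is dual to the coproduct of $\mathcal{Y}Sym$ and vice versa. *)

theory Defs
  imports Complex_Main
begin

text \<open>Rooted planar binary trees: Leaf is the tree with no internal node,
  Node s t is s \<or> t (left subtree s, right subtree t).\<close>
datatype tree = Leaf | Node tree tree

fun nodes :: "tree \<Rightarrow> nat" where
  "nodes Leaf = 0"
| "nodes (Node l r) = Suc (nodes l + nodes r)"

inductive rot :: "tree \<Rightarrow> tree \<Rightarrow> bool" where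
  rot_root: "rot (Node (Node a b) c) (Node a (Node b c))"
| rot_left: "rot l l' \<Longrightarrow> rot (Node l r) (Node l' r)"
| rot_right: "rot r r' \<Longrightarrow> rot (Node l r) (Node l r')"

definition tamari_le :: "tree \<Rightarrow> tree \<Rightarrow> bool" where
  "tamari_le = rot\<^sup>*\<^sup>*"

definition tamari_lt :: "tree \<Rightarrow> tree \<Rightarrow> bool" where
  "tamari_lt s t \<longleftrightarrow> tamari_le s t \<and> s \<noteq> t"

definition mobius :: "tree \<Rightarrow> tree \<Rightarrow> rat" where
  "mobius = (THE \<mu>. \<forall>t s. \<mu> t s =
      (if t = s then 1
       else if tamari_lt t s then - (\<Sum>u\<in>{u. tamari_le t u \<and> tamari_lt u s}. \<mu> t u)
       else 0))"

text \<open>splitting a tree at leaf i (leaves numbered 0..nodes t from left to right)\<close>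
fun split_at :: "tree \<Rightarrow> nat \<Rightarrow> tree \<times> tree" where
  "split_at Leaf i = (Leaf, Leaf)"
| "split_at (Node l r) i =
     (if i \<le> nodes l then (let (a, b) = split_at l i in (a, Node b r))
      else (let (c, d) = split_at r (i - nodes l - 1) in (Node l c, d)))"

fun under :: "tree \<Rightarrow> tree \<Rightarrow> tree" where
  "under Leaf t = t"
| "under (Node l r) t = Node l (under r t)"

definition progressive :: "tree \<Rightarrow> bool" where
  "progressive t \<longleftrightarrow> (\<exists>l. t = Node l Leaf)"

text \<open>Elements of YSym and of its graded dual LR are both represented by
  finitely supported coefficient functions on trees. For YSym, x u is the
  coefficient of F_u; for LR, \<phi> u is the value of the functional on F_u.
  (Graded dual: finite sums of homogeneous functionals; each Y_n is finite.)\<close>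
definition fin_supp :: "(tree \<Rightarrow> rat) \<Rightarrow> bool" where
  "fin_supp f \<longleftrightarrow> finite {t. f t \<noteq> 0}"

definition LR :: "(tree \<Rightarrow> rat) set" where
  "LR = {\<phi>. fin_supp \<phi>}"

definition M :: "tree \<Rightarrow> (tree \<Rightarrow> rat)" where
  "M t = (\<lambda>s. if tamari_le t s then mobius t s else 0)"

definition pair :: "(tree \<Rightarrow> rat) \<Rightarrow> (tree \<Rightarrow> rat) \<Rightarrow> rat" where
  "pair \<phi> x = (\<Sum>u\<in>{u. x u \<noteq> 0}. \<phi> u * x u)"

definition Mdual :: "tree \<Rightarrow> (tree \<Rightarrow> rat)" where
  "Mdual t = (THE \<phi>. \<phi> \<in> LR \<and> (\<forall>s. pair \<phi> (M s) = (if s = t then 1 else 0)))"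

text \<open>product of LR, dual to the coproduct
  \<Delta>(F_t) = \<Sum>_i F_{t_0} \<otimes> F_{t_1} of YSym\<close>
definition lr_mult :: "(tree \<Rightarrow> rat) \<Rightarrow> (tree \<Rightarrow> rat) \<Rightarrow> (tree \<Rightarrow> rat)" where
  "lr_mult \<phi> \<psi> = (\<lambda>t. \<Sum>i\<le>nodes t. \<phi> (fst (split_at t i)) * \<psi> (snd (split_at t i)))"

definition lr_one :: "tree \<Rightarrow> rat" where
  "lr_one = (\<lambda>t. if t = Leaf then 1 else 0)"

definition lr_scale :: "rat \<Rightarrow> (tree \<Rightarrow> rat) \<Rightarrow> (tree \<Rightarrow> rat)" where
  "lr_scale c \<phi> = (\<lambda>t. c * \<phi> t)"

definition word_mono :: "tree list \<Rightarrow> (tree \<Rightarrow> rat)" where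
  "word_mono ws = foldr lr_mult (map Mdual ws) lr_one"

definition free_assoc_on :: "'a set \<Rightarrow> ('a \<Rightarrow> (tree \<Rightarrow> rat)) \<Rightarrow> bool" where
  "free_assoc_on X g \<longleftrightarrow>
     (\<forall>a\<in>LR. \<forall>b\<in>LR. \<forall>c\<in>LR. lr_mult (lr_mult a b) c = lr_mult a (lr_mult b c)) \<and>
     (\<forall>a\<in>LR. lr_mult lr_one a = a \<and> lr_mult a lr_one = a) \<and>
     (\<forall>W c. finite W \<longrightarrow> W \<subseteq> lists X \<longrightarrow>
        (\<lambda>t. \<Sum>w\<in>W. c w * foldr lr_mult (map g w) lr_one t) = (\<lambda>t. 0) \<longrightarrow>
        (\<forall>w\<in>W. c w = 0)) \<and>
     (\<forall>\<phi>\<in>LR. \<exists>W c. finite W \<and> W \<subseteq> lists X \<and>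
        \<phi> = (\<lambda>t. \<Sum>w\<in>W. c w * foldr lr_mult (map g w) lr_one t))"

end

theory Submission
  imports Defs
begin

lemma rot_nodes: "rot u v \<Longrightarrow> nodes u = nodes v"
  by (induction rule: rot.induct) auto

fun wt :: "tree \<Rightarrow> nat" where
  "wt Leaf = 0" | "wt (Node l r) = wt l + wt r + nodes r"

lemma rot_wt: "rot u v \<Longrightarrow> wt u < wt v"
  by (induction rule: rot.induct) (auto simp: rot_nodes)

lemma le_refl[simp]: "tamari_le u u"
  unfolding tamari_le_def by simp

lemma le_trans: "tamari_le u v \<Longrightarrow> tamari_le v w \<Longrightarrow> tamari_le u w"
  unfolding tamari_le_def by (rule rtranclp_trans)

lemma le_nodes: "tamari_le u v \<Longrightarrow> nodes u = nodes v"
  unfolding tamari_le_def by (induction rule: rtranclp_induct) (auto dest: rot_nodes)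

lemma le_wt: "tamari_le u v \<Longrightarrow> wt u \<le> wt v"
  unfolding tamari_le_def by (induction rule: rtranclp_induct) (auto dest: rot_wt)

lemma lt_wt: "tamari_le u v \<Longrightarrow> u \<noteq> v \<Longrightarrow> wt u < wt v"
proof -
  assume a: "tamari_le u v" "u \<noteq> v"
  then have "rot\<^sup>+\<^sup>+ u v" unfolding tamari_le_def by (auto dest: rtranclpD)
  then show ?thesis by (induction rule: tranclp_induct) (auto dest: rot_wt)
qed

lemma le_antisym: "tamari_le u v \<Longrightarrow> tamari_le v u \<Longrightarrow> u = v"
  using lt_wt le_wt by fastforce

lemma le_Node_left: "tamari_le l l' \<Longrightarrow> tamari_le (Node l r) (Node l' r)"
  unfolding tamari_le_def
  by (induction rule: rtranclp_induct) (auto intro: rtranclp.rtrancl_into_rtrancl rot_left)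

lemma le_Node_right: "tamari_le r r' \<Longrightarrow> tamari_le (Node l r) (Node l r')"
  unfolding tamari_le_def
  by (induction rule: rtranclp_induct) (auto intro: rtranclp.rtrancl_into_rtrancl rot_right)

lemma rot_le: "rot u v \<Longrightarrow> tamari_le u v"
  unfolding tamari_le_def by auto

lemma finite_nodes_le: "finite {t. nodes t \<le> n}"
proof (induction n)
  case 0
  have "{t. nodes t \<le> 0} = {Leaf}" by (auto elim: nodes.elims)
  then show ?case by simp
next
  case (Suc n)
  have "{t. nodes t \<le> Suc n} \<subseteq> insert Leaf ((\<lambda>(l,r). Node l r) ` ({t. nodes t \<le> n} \<times> {t. nodes t \<le> n}))"
  proof
    fix t assume "t \<in> {t. nodes t \<le> Suc n}"
    then show "t \<in> insert Leaf ((\<lambda>(l,r). Node l r) ` ({t. nodes t \<le> n} \<times> {t. nodes t \<le> n}))"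
      by (cases t) auto
  qed
  then show ?case using Suc by (meson finite_SigmaI finite_imageI finite_insert finite_subset)
qed

lemma finite_up: "finite {v. tamari_le s v}"
  by (rule finite_subset[OF _ finite_nodes_le[of "nodes s"]]) (auto dest: le_nodes)

lemma finite_down: "finite {v. tamari_le v s}"
  by (rule finite_subset[OF _ finite_nodes_le[of "nodes s"]]) (auto dest: le_nodes)

lemma ex_max: "finite S \<Longrightarrow> S \<noteq> {} \<Longrightarrow> \<exists>s\<in>S. \<forall>u\<in>S. (f::'a \<Rightarrow> nat) u \<le> f s"
proof (induction rule: finite_ne_induct)
  case (singleton x) then show ?case by auto
next
  case (insert x F)
  then obtain s where "s \<in> F" "\<forall>u\<in>F. f u \<le> f s" by auto
  then show ?case by (cases "f x \<le> f s") auto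
qed

function mu :: "tree \<Rightarrow> tree \<Rightarrow> rat" where
  "mu t s = (if t = s then 1
       else if tamari_lt t s then - (\<Sum>u\<in>{u. tamari_le t u \<and> tamari_lt u s}. mu t u)
       else 0)"
  by auto
termination
  by (relation "measure (\<lambda>(t,s). wt s)") (auto simp: tamari_lt_def intro: lt_wt)

declare mu.simps[simp del]

lemma mu_unique:
  assumes h: "\<forall>t s. \<mu> t s = (if t = s then 1
       else if tamari_lt t s then - (\<Sum>u\<in>{u. tamari_le t u \<and> tamari_lt u s}. \<mu> t u)
       else 0)"
  shows "\<mu> t s = mu t s"
proof (induction s rule: measure_induct_rule[where f=wt])
  case (less s)
  have "\<mu> t s = (if t = s then 1
       else if tamari_lt t s then - (\<Sum>u\<in>{u. tamari_le t u \<and> tamari_lt u s}. \<mu> t u)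
       else 0)" using h by blast
  also have "\<dots> = (if t = s then 1
       else if tamari_lt t s then - (\<Sum>u\<in>{u. tamari_le t u \<and> tamari_lt u s}. mu t u)
       else 0)"
    using less by (auto intro!: sum.cong simp: tamari_lt_def intro: lt_wt)
  also have "\<dots> = mu t s" by (rule mu.simps[symmetric])
  finally show ?case .
qed

lemma mobius_mu: "mobius = mu"
  unfolding mobius_def
proof (rule the_equality)
  show "\<forall>t s. mu t s = (if t = s then 1
       else if tamari_lt t s then - (\<Sum>u\<in>{u. tamari_le t u \<and> tamari_lt u s}. mu t u)
       else 0)" by (metis mu.simps)
next
  fix \<mu> :: "tree \<Rightarrow> tree \<Rightarrow> rat" assume "\<forall>t s. \<mu> t s = (if t = s then 1
       else if tamari_lt t s then - (\<Sum>u\<in>{u. tamari_le t u \<and> tamari_lt u s}. \<mu> t u)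
       else 0)"
  then show "\<mu> = mu" using mu_unique by blast
qed

lemma mobius_eq: "mobius t s = (if t = s then 1
       else if tamari_lt t s then - (\<Sum>u\<in>{u. tamari_le t u \<and> tamari_lt u s}. mobius t u)
       else 0)"
  unfolding mobius_mu by (rule mu.simps)


definition ind :: "tree \<Rightarrow> tree \<Rightarrow> rat" where
  "ind t = (\<lambda>u. if tamari_le u t then 1 else 0)"

lemma pair_ind_M: "pair (ind t) (M s) = (if s = t then 1 else 0)"
proof -
  have "pair (ind t) (M s) = (\<Sum>u\<in>{u. tamari_le s u}. ind t u * M s u)"
    unfolding pair_def
    by (rule sum.mono_neutral_left) (auto simp: finite_up M_def split: if_splits)
  also have "\<dots> = (\<Sum>u\<in>{u. tamari_le s u}. if tamari_le u t then mobius s u else 0)"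
    by (rule sum.cong) (auto simp: ind_def M_def)
  also have "\<dots> = (\<Sum>u\<in>{u. tamari_le s u \<and> tamari_le u t}. mobius s u)"
    by (rule sum.mono_neutral_cong_right) (auto simp: finite_up)
  also have "\<dots> = (if s = t then 1 else 0)"
  proof (cases "s = t")
    case True
    have "{u. tamari_le s u \<and> tamari_le u t} = {s}"
      apply (rule set_eqI) using True le_antisym le_refl by blast
    then show ?thesis using True mobius_eq[of s s] by simp
  next
    case False
    show ?thesis
    proof (cases "tamari_le s t")
      case True
      then have lt: "tamari_lt s t" using False by (simp add: tamari_lt_def)
      have e0: "{u. tamari_le s u \<and> tamari_le u t} = insert t {u. tamari_le s u \<and> tamari_lt u t}"
        using True by (auto simp: tamari_lt_def)
      have fin: "finite {u. tamari_le s u \<and> tamari_lt u t}"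
        by (rule finite_subset[OF _ finite_up[of s]]) auto
      have "(\<Sum>u\<in>{u. tamari_le s u \<and> tamari_le u t}. mobius s u)
          = mobius s t + (\<Sum>u\<in>{u. tamari_le s u \<and> tamari_lt u t}. mobius s u)"
        unfolding e0 using fin by (subst sum.insert) (auto simp: tamari_lt_def)
      also have "\<dots> = 0" using mobius_eq[of s t] lt False by simp
      finally show ?thesis using False by simp
    next
      case False2: False
      then have E: "{u. tamari_le s u \<and> tamari_le u t} = {}" using le_trans by blast
      show ?thesis unfolding E using False by simp
    qed
  qed
  finally show ?thesis .
qed

lemma M_self: "M s s = 1"
  unfolding M_def using mobius_eq[of s s] by simp

lemma pair_zero:
  assumes fs: "fin_supp \<chi>" and z: "\<forall>s. pair \<chi> (M s) = 0"
  shows "\<chi> = (\<lambda>_. 0)"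
proof (rule ccontr)
  let ?S = "{u. \<chi> u \<noteq> 0}"
  assume "\<chi> \<noteq> (\<lambda>_. 0)"
  then have ne: "?S \<noteq> {}" by auto
  obtain s where s: "s \<in> ?S" "\<forall>u\<in>?S. wt u \<le> wt s"
    using ex_max[OF fs[unfolded fin_supp_def] ne] by blast
  have fin: "finite {u. M s u \<noteq> 0}"
    by (rule finite_subset[OF _ finite_up[of s]]) (auto simp: M_def split: if_splits)
  have sin: "s \<in> {u. M s u \<noteq> 0}" using M_self by simp
  have "pair \<chi> (M s) = \<chi> s * M s s + (\<Sum>u\<in>{u. M s u \<noteq> 0} - {s}. \<chi> u * M s u)"
    unfolding pair_def using fin sin by (simp add: sum.remove)
  also have "(\<Sum>u\<in>{u. M s u \<noteq> 0} - {s}. \<chi> u * M s u) = 0"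
  proof (rule sum.neutral, rule ballI)
    fix u assume "u \<in> {u. M s u \<noteq> 0} - {s}"
    then have u: "M s u \<noteq> 0" "u \<noteq> s" by auto
    then have "tamari_le s u" by (auto simp: M_def split: if_splits)
    then have "wt s < wt u" using u lt_wt by metis
    have "\<chi> u = 0"
    proof (rule ccontr)
      assume "\<chi> u \<noteq> 0"
      then have "wt u \<le> wt s" using s(2) by simp
      then show False using \<open>wt s < wt u\<close> by simp
    qed
    then show "\<chi> u * M s u = 0" by simp
  qed
  finally have "pair \<chi> (M s) = \<chi> s" using M_self by simp
  then show False using z s by simp
qed

lemma ind_LR: "ind t \<in> LR"
  unfolding LR_def fin_supp_def ind_def
  by (rule CollectI, rule finite_subset[OF _ finite_down[of t]]) auto

lemma Mdual_ind: "Mdual t = ind t"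
  unfolding Mdual_def
proof (rule the_equality)
  show "ind t \<in> LR \<and> (\<forall>s. pair (ind t) (M s) = (if s = t then 1 else 0))"
    using ind_LR pair_ind_M by simp
next
  fix \<phi> assume h: "\<phi> \<in> LR \<and> (\<forall>s. pair \<phi> (M s) = (if s = t then 1 else 0))"
  let ?\<chi> = "\<lambda>u. \<phi> u - ind t u"
  have sub: "{u. ?\<chi> u \<noteq> 0} \<subseteq> {u. \<phi> u \<noteq> 0} \<union> {u. ind t u \<noteq> 0}" by auto
  have "fin_supp ?\<chi>" using h ind_LR unfolding LR_def fin_supp_def
    using finite_subset[OF sub] by blast
  moreover have "\<forall>s. pair ?\<chi> (M s) = 0"
  proof
    fix s
    have "pair ?\<chi> (M s) = pair \<phi> (M s) - pair (ind t) (M s)"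
      unfolding pair_def by (simp add: sum_subtractf left_diff_distrib)
    then show "pair ?\<chi> (M s) = 0" using h pair_ind_M by simp
  qed
  ultimately have "?\<chi> = (\<lambda>_. 0)" by (rule pair_zero)
  show "\<phi> = ind t"
  proof
    fix u have "?\<chi> u = 0" using fun_cong[OF \<open>?\<chi> = (\<lambda>_. 0)\<close>] by simp
    then show "\<phi> u = ind t u" by simp
  qed
qed


lemma split_le: "i \<le> nodes l \<Longrightarrow> split_at (Node l r) i = (fst (split_at l i), Node (snd (split_at l i)) r)"
  by (simp add: split_def Let_def)

lemma split_gt: "\<not> i \<le> nodes l \<Longrightarrow> split_at (Node l r) i =
   (Node l (fst (split_at r (i - nodes l - 1))), snd (split_at r (i - nodes l - 1)))"
  by (simp add: split_def Let_def)

declare split_at.simps(2)[simp del]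

lemma split_nodes: "i \<le> nodes t \<Longrightarrow> nodes (fst (split_at t i)) = i \<and> nodes (snd (split_at t i)) = nodes t - i"
proof (induction t arbitrary: i)
  case Leaf then show ?case by simp
next
  case (Node l r)
  show ?case
  proof (cases "i \<le> nodes l")
    case True then show ?thesis using Node by (simp add: split_le)
  next
    case False
    then have "i - nodes l - 1 \<le> nodes r" using Node.prems by simp
    then show ?thesis using Node.IH(2)[of "i - nodes l - 1"] False by (simp add: split_gt)
  qed
qed

lemma split0: "split_at t 0 = (Leaf, t)"
  by (induction t) (auto simp: split_le)

lemma split_full: "split_at t (nodes t) = (t, Leaf)"
  by (induction t) (auto simp: split_gt)

lemma nodes_under: "nodes (under s t) = nodes s + nodes t"
  by (induction s) auto

lemma split_under: "split_at (under s t) (nodes s) = (s, t)"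
  by (induction s) (auto simp: split0 split_gt)

lemma coassoc: "j \<le> i \<Longrightarrow> i \<le> nodes t \<Longrightarrow>
  split_at (fst (split_at t i)) j = (fst (split_at t j), fst (split_at (snd (split_at t j)) (i - j)))
  \<and> snd (split_at t i) = snd (split_at (snd (split_at t j)) (i - j))"
proof (induction t arbitrary: i j)
  case Leaf then show ?case by simp
next
  case (Node l r)
  show ?case
  proof (cases "i \<le> nodes l")
    case True
    then have j: "j \<le> nodes l" using Node.prems by simp
    have nb: "nodes (snd (split_at l j)) = nodes l - j" using split_nodes[OF j] by simp
    have "i - j \<le> nodes (snd (split_at l j))" using nb True by simp
    then show ?thesis using Node.IH(1)[OF Node.prems(1) True] True j
      by (simp add: split_le)
  next
    case False
    show ?thesis
    proof (cases "j \<le> nodes l")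
      case True
      have nb: "nodes (snd (split_at l j)) = nodes l - j" using split_nodes[OF True] by simp
      have "\<not> i - j \<le> nodes (snd (split_at l j))" using nb False True by simp
      moreover have "i - j - nodes (snd (split_at l j)) - 1 = i - nodes l - 1" using nb False True by simp
      ultimately show ?thesis using False True by (simp add: split_le split_gt)
    next
      case False2: False
      have a: "j - nodes l - 1 \<le> i - nodes l - 1" "i - nodes l - 1 \<le> nodes r"
        using Node.prems False by auto
      have nc: "nodes (fst (split_at r (i - nodes l - 1))) = i - nodes l - 1"
        using split_nodes[OF a(2)] by simp
      have e: "i - nodes l - 1 - (j - nodes l - 1) = i - j" using False2 False Node.prems by simp
      show ?thesis using Node.IH(2)[OF a] False False2 nc e
        by (simp add: split_gt)
    qed
  qed
qed


declare le_trans[trans]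

lemma rot_split: "rot u v \<Longrightarrow>
  tamari_le (fst (split_at u k)) (fst (split_at v k)) \<and> tamari_le (snd (split_at u k)) (snd (split_at v k))"
proof (induction arbitrary: k rule: rot.induct)
  case (rot_root a b c)
  show ?case
  proof (cases "k \<le> nodes a")
    case True
    then show ?thesis by (simp add: split_le rot_le rot.rot_root)
  next
    case F1: False
    show ?thesis
    proof (cases "k - nodes a - 1 \<le> nodes b")
      case True
      then have "k \<le> nodes (Node a b)" by simp
      then show ?thesis using F1 True by (simp add: split_le split_gt)
    next
      case False
      then have "\<not> k \<le> nodes (Node a b)" by simp
      moreover have "k - nodes (Node a b) - 1 = k - nodes a - 1 - nodes b - 1" by simp
      ultimately show ?thesis using F1 False
        by (simp add: split_le split_gt rot_le rot.rot_root del: nodes.simps)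
    qed
  qed
next
  case (rot_left l l' r)
  have n: "nodes l = nodes l'" using rot_left.hyps rot_nodes by blast
  show ?case
  proof (cases "k \<le> nodes l")
    case True
    then show ?thesis using n rot_left.IH[of k] by (simp add: split_le le_Node_left)
  next
    case False
    then show ?thesis using n rot_left.hyps by (simp add: split_gt rot_le rot.rot_left)
  qed
next
  case (rot_right r r' l)
  have n: "nodes r = nodes r'" using rot_right.hyps rot_nodes by blast
  show ?case
  proof (cases "k \<le> nodes l")
    case True
    then show ?thesis using rot_right.hyps by (simp add: split_le rot_le rot.rot_right)
  next
    case False
    then show ?thesis using n rot_right.IH[of "k - nodes l - 1"] by (simp add: split_gt le_Node_right)
  qed
qed

lemma le_split: "tamari_le u v \<Longrightarrow>
  tamari_le (fst (split_at u k)) (fst (split_at v k)) \<and> tamari_le (snd (split_at u k)) (snd (split_at v k))"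
proof -
  assume "tamari_le u v"
  then have "rot\<^sup>*\<^sup>* u v" by (simp add: tamari_le_def)
  then show ?thesis
  proof (induction rule: rtranclp_induct)
    case base show ?case by simp
  next
    case (step y z)
    then show ?case using rot_split[OF step(2), of k] le_trans by blast
  qed
qed

lemma rot_under: "rot s s' \<Longrightarrow> rot (under s t) (under s' t)"
  by (induction rule: rot.induct) (auto intro: rot.intros)

lemma le_under_left: "tamari_le s s' \<Longrightarrow> tamari_le (under s t) (under s' t)"
  unfolding tamari_le_def
  by (induction rule: rtranclp_induct) (auto intro: rtranclp.rtrancl_into_rtrancl rot_under)

lemma le_under_right: "tamari_le t t' \<Longrightarrow> tamari_le (under s t) (under s t')"
  by (induction s) (auto intro: le_Node_right)

lemma lemD: "tamari_le (Node (under a b) r) (under a (Node b r))"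
proof (induction a)
  case Leaf then show ?case by simp
next
  case (Node a1 a2)
  have "rot (Node (Node a1 (under a2 b)) r) (Node a1 (Node (under a2 b) r))" by (rule rot.rot_root)
  then have "tamari_le (Node (Node a1 (under a2 b)) r) (Node a1 (Node (under a2 b) r))" by (rule rot_le)
  also have "tamari_le (Node a1 (Node (under a2 b) r)) (Node a1 (under a2 (Node b r)))"
    using Node le_Node_right by blast
  finally show ?case by simp
qed

lemma lemB: "tamari_le u (under (fst (split_at u k)) (snd (split_at u k)))"
proof (induction u arbitrary: k)
  case Leaf then show ?case by simp
next
  case (Node l r)
  show ?case
  proof (cases "k \<le> nodes l")
    case True
    have "tamari_le (Node l r) (Node (under (fst (split_at l k)) (snd (split_at l k))) r)"
      using Node.IH(1) le_Node_left by blast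
    also have "tamari_le \<dots> (under (fst (split_at l k)) (Node (snd (split_at l k)) r))" by (rule lemD)
    finally show ?thesis using True by (simp add: split_le)
  next
    case False
    then show ?thesis using Node.IH(2) le_Node_right by (simp add: split_gt)
  qed
qed

lemma key: "tamari_le u (under s t) \<longleftrightarrow>
  nodes s \<le> nodes u \<and> tamari_le (fst (split_at u (nodes s))) s \<and> tamari_le (snd (split_at u (nodes s))) t"
proof
  assume h: "tamari_le u (under s t)"
  have "nodes u = nodes s + nodes t" using le_nodes[OF h] nodes_under by simp
  then show "nodes s \<le> nodes u \<and> tamari_le (fst (split_at u (nodes s))) s \<and> tamari_le (snd (split_at u (nodes s))) t"
    using le_split[OF h, of "nodes s"] split_under[of s t] by simp
next
  assume h: "nodes s \<le> nodes u \<and> tamari_le (fst (split_at u (nodes s))) s \<and> tamari_le (snd (split_at u (nodes s))) t"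
  let ?a = "fst (split_at u (nodes s))" and ?b = "snd (split_at u (nodes s))"
  have "tamari_le u (under ?a ?b)" by (rule lemB)
  also have "tamari_le (under ?a ?b) (under s ?b)" using h le_under_left by blast
  also have "tamari_le (under s ?b) (under s t)" using h le_under_right by blast
  finally show "tamari_le u (under s t)" .
qed

lemma mult_ind: "lr_mult (ind s) (ind t) = ind (under s t)"
proof
  fix u
  let ?g = "\<lambda>i. ind s (fst (split_at u i)) * ind t (snd (split_at u i))"
  have "lr_mult (ind s) (ind t) u = (\<Sum>i\<le>nodes u. ?g i)" unfolding lr_mult_def by simp
  also have "\<dots> = (\<Sum>i\<le>nodes u. if i = nodes s then ?g i else 0)"
  proof (rule sum.cong)
    fix i assume "i \<in> {..nodes u}"
    then have "nodes (fst (split_at u i)) = i" using split_nodes by simp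
    then show "?g i = (if i = nodes s then ?g i else 0)"
      by (auto simp: ind_def dest: le_nodes)
  qed simp
  also have "\<dots> = (if nodes s \<le> nodes u then ?g (nodes s) else 0)"
    by (simp add: sum.delta')
  also have "\<dots> = ind (under s t) u"
    using key[of u s t] by (auto simp: ind_def)
  finally show "lr_mult (ind s) (ind t) u = ind (under s t) u" .
qed

lemma tri_reindex: "(\<Sum>i\<le>(n::nat). \<Sum>j\<le>i. G i j) = (\<Sum>j\<le>n. \<Sum>l\<le>n-j. (G (j+l) j :: 'a::comm_monoid_add))"
proof -
  have "(\<Sum>i\<le>n. \<Sum>j\<le>i. G i j) = (\<Sum>(i,j)\<in>Sigma {..n} (\<lambda>i. {..i}). G i j)"
    by (rule sum.Sigma) auto
  also have "\<dots> = (\<Sum>(j,l)\<in>Sigma {..n} (\<lambda>j. {..n-j}). G (j+l) j)"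
    by (rule sum.reindex_bij_witness[where i="\<lambda>(j,l). (j+l, j)" and j="\<lambda>(i,j). (j, i-j)"]) auto
  also have "\<dots> = (\<Sum>j\<le>n. \<Sum>l\<le>n-j. G (j+l) j)"
    by (rule sum.Sigma[symmetric]) auto
  finally show ?thesis .
qed

lemma mult_assoc: "lr_mult (lr_mult a b) c = lr_mult a (lr_mult b c)"
proof
  fix t
  let ?n = "nodes t"
  let ?G = "\<lambda>i j. a (fst (split_at t j)) * b (fst (split_at (snd (split_at t j)) (i - j)))
                 * c (snd (split_at (snd (split_at t j)) (i - j)))"
  have "lr_mult (lr_mult a b) c t = (\<Sum>i\<le>?n. \<Sum>j\<le>i. ?G i j)"
    unfolding lr_mult_def sum_distrib_right
  proof (rule sum.cong)
    fix i assume i: "i \<in> {..?n}"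
    then have ni: "nodes (fst (split_at t i)) = i" using split_nodes by simp
    show "(\<Sum>j\<le>nodes (fst (split_at t i)). a (fst (split_at (fst (split_at t i)) j)) * b (snd (split_at (fst (split_at t i)) j)) * c (snd (split_at t i)))
        = (\<Sum>j\<le>i. ?G i j)"
      unfolding ni
    proof (rule sum.cong)
      fix j assume "j \<in> {..i}"
      then show "a (fst (split_at (fst (split_at t i)) j)) * b (snd (split_at (fst (split_at t i)) j)) * c (snd (split_at t i)) = ?G i j"
        using coassoc[of j i t] i by simp
    qed simp
  qed simp
  also have "\<dots> = (\<Sum>j\<le>?n. \<Sum>l\<le>?n-j. ?G (j+l) j)" by (rule tri_reindex)
  also have "\<dots> = lr_mult a (lr_mult b c) t"
    unfolding lr_mult_def sum_distrib_left
  proof (rule sum.cong)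
    fix j assume j: "j \<in> {..?n}"
    then have nj: "nodes (snd (split_at t j)) = ?n - j" using split_nodes by simp
    show "(\<Sum>l\<le>?n-j. ?G (j+l) j) = (\<Sum>l\<le>nodes (snd (split_at t j)). a (fst (split_at t j)) *
           (b (fst (split_at (snd (split_at t j)) l)) * c (snd (split_at (snd (split_at t j)) l))))"
      unfolding nj by (simp add: mult.assoc)
  qed simp
  finally show "lr_mult (lr_mult a b) c t = lr_mult a (lr_mult b c) t" .
qed

lemma nodes0: "nodes x = 0 \<longleftrightarrow> x = Leaf"
  by (cases x) auto

lemma fst_split_Leaf: "i \<le> nodes t \<Longrightarrow> fst (split_at t i) = Leaf \<longleftrightarrow> i = 0"
proof -
  assume i: "i \<le> nodes t"
  have "nodes (fst (split_at t i)) = i" using split_nodes[OF i] by simp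
  then show ?thesis using nodes0[of "fst (split_at t i)"] by simp
qed

lemma snd_split_Leaf: "i \<le> nodes t \<Longrightarrow> snd (split_at t i) = Leaf \<longleftrightarrow> i = nodes t"
proof -
  assume i: "i \<le> nodes t"
  have "nodes (snd (split_at t i)) = nodes t - i" using split_nodes[OF i] by simp
  then show ?thesis using nodes0[of "snd (split_at t i)"] i by auto
qed

lemma mult_one_left: "lr_mult lr_one a = a"
proof
  fix t
  have "lr_mult lr_one a t = (\<Sum>i\<le>nodes t. if i = 0 then a t else 0)"
    unfolding lr_mult_def lr_one_def
    by (rule sum.cong) (auto simp: fst_split_Leaf split0)
  then show "lr_mult lr_one a t = a t" by simp
qed

lemma mult_one_right: "lr_mult a lr_one = a"
proof
  fix t
  have "lr_mult a lr_one t = (\<Sum>i\<le>nodes t. if i = nodes t then a t else 0)"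
    unfolding lr_mult_def lr_one_def
    by (rule sum.cong) (auto simp: snd_split_Leaf split_full)
  then show "lr_mult a lr_one t = a t" by simp
qed


definition tau :: "tree list \<Rightarrow> tree" where "tau w = foldr under w Leaf"

lemma ind_Leaf: "ind Leaf = lr_one"
proof
  fix u
  have "tamari_le u Leaf \<longleftrightarrow> u = Leaf" using le_nodes[of u Leaf] nodes0[of u] by auto
  then show "ind Leaf u = lr_one u" by (simp add: ind_def lr_one_def)
qed

lemma word_eq: "foldr lr_mult (map Mdual w) lr_one = ind (tau w)"
  by (induction w) (simp_all add: tau_def ind_Leaf Mdual_ind mult_ind)

lemma tau_inj: "w1 \<in> lists {t. progressive t} \<Longrightarrow> w2 \<in> lists {t. progressive t} \<Longrightarrow> tau w1 = tau w2 \<Longrightarrow> w1 = w2"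
proof (induction w1 arbitrary: w2)
  case Nil
  then show ?case by (cases w2) (auto simp: tau_def progressive_def)
next
  case (Cons x w1)
  then obtain l where x: "x = Node l Leaf" by (auto simp: progressive_def)
  show ?case
  proof (cases w2)
    case Nil
    then show ?thesis using Cons.prems x by (simp add: tau_def)
  next
    case (Cons y w2')
    then obtain l' where y: "y = Node l' Leaf" using Cons.prems by (auto simp: progressive_def)
    have "Node l (tau w1) = Node l' (tau w2')" using Cons.prems(3) x y \<open>w2 = y # w2'\<close> by (simp add: tau_def)
    then have "l = l'" "tau w1 = tau w2'" by auto
    then show ?thesis using Cons.IH[of w2'] Cons.prems x y \<open>w2 = y # w2'\<close> by simp
  qed
qed

fun dec :: "tree \<Rightarrow> tree list" where
  "dec Leaf = []" | "dec (Node l r) = Node l Leaf # dec r"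

lemma tau_dec: "tau (dec t) = t"
  by (induction t) (simp_all add: tau_def)

lemma dec_lists: "dec t \<in> lists {t. progressive t}"
  by (induction t) (simp_all add: progressive_def)

lemma span_D:
  "finite D \<Longrightarrow> (\<forall>u\<in>D. \<forall>v. tamari_le v u \<longrightarrow> v \<in> D) \<Longrightarrow> {u. \<phi> u \<noteq> 0} \<subseteq> D
   \<Longrightarrow> \<exists>c. \<phi> = (\<lambda>v. \<Sum>t\<in>D. c t * ind t v)"
proof (induction "card D" arbitrary: D \<phi> rule: less_induct)
  case less
  show ?case
  proof (cases "D = {}")
    case True
    then have "\<phi> = (\<lambda>v. 0)" using less.prems(3) by auto
    then show ?thesis using True by simp
  next
    case False
    obtain u where u: "u \<in> D" "\<forall>v\<in>D. wt v \<le> wt u" using ex_max[OF less.prems(1) False] by blast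
    let ?D = "D - {u}"
    let ?\<phi> = "\<lambda>v. \<phi> v - \<phi> u * ind u v"
    have c: "card ?D < card D" using card_Diff1_less[OF less.prems(1) u(1)] .
    have dc: "\<forall>w\<in>?D. \<forall>v. tamari_le v w \<longrightarrow> v \<in> ?D"
    proof (intro ballI allI impI)
      fix w v assume w: "w \<in> ?D" and vw: "tamari_le v w"
      then have vD: "v \<in> D" using less.prems(2) by blast
      show "v \<in> ?D"
      proof
        show "v \<in> D" by fact
        show "v \<notin> {u}"
        proof
          assume "v \<in> {u}"
          then have "tamari_le u w" "u \<noteq> w" using vw w by auto
          then have "wt u < wt w" using lt_wt by blast
          then show False using u w by force
        qed
      qed
    qed
    have sp: "{v. ?\<phi> v \<noteq> 0} \<subseteq> ?D"
    proof
      fix v assume v: "v \<in> {v. ?\<phi> v \<noteq> 0}"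
      have "v \<noteq> u" using v by (auto simp: ind_def)
      moreover have "v \<in> D"
      proof (cases "\<phi> v = 0")
        case True
        then have "ind u v \<noteq> 0" using v by auto
        then have "tamari_le v u" by (auto simp: ind_def split: if_splits)
        then show ?thesis using less.prems(2) u by blast
      next
        case False then show ?thesis using less.prems(3) by blast
      qed
      ultimately show "v \<in> ?D" by simp
    qed
    obtain c where cphi: "?\<phi> = (\<lambda>v. \<Sum>t\<in>?D. c t * ind t v)"
      using less.hyps[OF c _ dc sp] less.prems(1) by blast
    let ?c = "c(u := \<phi> u)"
    have "\<phi> = (\<lambda>v. \<Sum>t\<in>D. ?c t * ind t v)"
    proof
      fix v
      have "(\<Sum>t\<in>D. ?c t * ind t v) = ?c u * ind u v + (\<Sum>t\<in>?D. ?c t * ind t v)"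
        using less.prems(1) u(1) by (simp add: sum.remove)
      also have "(\<Sum>t\<in>?D. ?c t * ind t v) = (\<Sum>t\<in>?D. c t * ind t v)"
        by (rule sum.cong) auto
      also have "\<dots> = ?\<phi> v" using fun_cong[OF cphi, of v] by simp
      finally show "\<phi> v = (\<Sum>t\<in>D. ?c t * ind t v)" by simp
    qed
    then show ?thesis by blast
  qed
qed

lemma le_sum_nat: "finite A \<Longrightarrow> x \<in> A \<Longrightarrow> (f x::nat) \<le> sum f A"
  by (induction A rule: finite_induct) auto

lemma span:
  assumes "\<phi> \<in> LR"
  shows "\<exists>W c. finite W \<and> W \<subseteq> lists {t. progressive t} \<and>
        \<phi> = (\<lambda>t. \<Sum>w\<in>W. c w * foldr lr_mult (map Mdual w) lr_one t)"
proof -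
  let ?S = "{u. \<phi> u \<noteq> 0}"
  have fS: "finite ?S" using assms by (simp add: LR_def fin_supp_def)
  define N where "N = (\<Sum>u\<in>?S. nodes u)"
  let ?D = "{t. nodes t \<le> N}"
  have "?S \<subseteq> ?D"
  proof
    fix u assume uS: "u \<in> ?S"
    have "nodes u \<le> N" unfolding N_def using fS uS by (rule le_sum_nat)
    then show "u \<in> ?D" by simp
  qed
  note sub = this
  have dc: "\<forall>u\<in>?D. \<forall>v. tamari_le v u \<longrightarrow> v \<in> ?D"
  proof (intro ballI allI impI)
    fix u v assume "u \<in> ?D" "tamari_le v u"
    then show "v \<in> ?D" using le_nodes[OF \<open>tamari_le v u\<close>] by simp
  qed
  obtain c where c: "\<phi> = (\<lambda>v. \<Sum>t\<in>?D. c t * ind t v)"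
    using span_D[OF finite_nodes_le dc sub] by blast
  have inj: "inj_on dec ?D"
  proof (rule inj_onI)
    fix x y assume "x \<in> ?D" "y \<in> ?D" "dec x = dec y"
    then have "tau (dec x) = tau (dec y)" by simp
    then show "x = y" by (simp add: tau_dec)
  qed
  have e: "\<phi> = (\<lambda>t. \<Sum>w\<in>dec ` ?D. c (tau w) * foldr lr_mult (map Mdual w) lr_one t)"
  proof
    fix t
    have "(\<Sum>w\<in>dec ` ?D. c (tau w) * foldr lr_mult (map Mdual w) lr_one t)
        = (\<Sum>x\<in>?D. c (tau (dec x)) * foldr lr_mult (map Mdual (dec x)) lr_one t)"
      by (simp only: sum.reindex[OF inj] comp_def)
    also have "\<dots> = (\<Sum>x\<in>?D. c x * ind x t)"
      unfolding word_eq tau_dec by (rule refl)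
    finally show "\<phi> t = (\<Sum>w\<in>dec ` ?D. c (tau w) * foldr lr_mult (map Mdual w) lr_one t)"
      using fun_cong[OF c, of t] by simp
  qed
  have l: "dec ` ?D \<subseteq> lists {t. progressive t}" using dec_lists by blast
  have f: "finite (dec ` ?D)" by (rule finite_imageI[OF finite_nodes_le])
  show ?thesis
    apply (rule exI[where x="dec ` ?D"])
    apply (rule exI[where x="\<lambda>w. c (tau w)"])
    by (intro conjI f l e)
qed

lemma indep:
  assumes fW: "finite W" and WX: "W \<subseteq> lists {t. progressive t}"
    and z: "(\<lambda>t. \<Sum>w\<in>W. c w * foldr lr_mult (map Mdual w) lr_one t) = (\<lambda>t. 0)"
  shows "\<forall>w\<in>W. c w = 0"
proof (rule ccontr)
  let ?W = "{w\<in>W. c w \<noteq> 0}"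
  assume "\<not> (\<forall>w\<in>W. c w = 0)"
  then have ne: "?W \<noteq> {}" by auto
  have fW': "finite ?W" using fW by simp
  obtain w0 where w0: "w0 \<in> ?W" "\<forall>w\<in>?W. wt (tau w) \<le> wt (tau w0)"
    using ex_max[OF fW' ne, of "\<lambda>w. wt (tau w)"] by blast
  have w0W: "w0 \<in> W" using w0(1) by simp
  have z0: "(\<Sum>w\<in>W. c w * ind (tau w) (tau w0)) = 0"
    using fun_cong[OF z, of "tau w0"] unfolding word_eq by simp
  have "(\<Sum>w\<in>W. c w * ind (tau w) (tau w0)) = c w0 * ind (tau w0) (tau w0) + (\<Sum>w\<in>W - {w0}. c w * ind (tau w) (tau w0))"
    by (rule sum.remove[OF fW w0W])
  also have "(\<Sum>w\<in>W - {w0}. c w * ind (tau w) (tau w0)) = 0"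
  proof (rule sum.neutral, rule ballI)
    fix w assume w: "w \<in> W - {w0}"
    show "c w * ind (tau w) (tau w0) = 0"
    proof (cases "c w = 0")
      case False
      have "tau w \<noteq> tau w0" using tau_inj[of w w0] w w0(1) WX by blast
      moreover have "wt (tau w) \<le> wt (tau w0)" using w0(2) w False by blast
      ultimately have "\<not> tamari_le (tau w0) (tau w)" using lt_wt[of "tau w0" "tau w"] by auto
      then show ?thesis by (simp add: ind_def)
    qed simp
  qed
  finally have "c w0 = 0" using z0 by (simp add: ind_def)
  then show False using w0(1) by simp
qed

theorem theorem8p1:
  shows "free_assoc_on {t. progressive t} Mdual
         \<and> (\<forall>s t. lr_mult (Mdual s) (Mdual t) = Mdual (under s t))"
  unfolding free_assoc_on_def
  using mult_assoc mult_one_left mult_one_right indep span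
  by (simp add: Mdual_ind mult_ind)

end
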